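(* Let $\mathcal{H}$ be a hereditary $\sigma$-ring of sets, let $\mu^*$ be an outer measure on $\mathcal{H}$, let $X$ be a set with $X\cap\bigcup\mathcal{H}\neq\emptyset$, and let $\overline{\overline{S}}$ be the class of all $\mu^{**}$-measurable sets. Then $\overline{\overline{S}}$ is a $\sigma$-ring.
   Context: A nonempty class $\mathcal{E}$ of sets is hereditary if $F\in\mathcal{E}$ whenever $E\in\mathcal{E}$ and $F\subseteq E$. A set $E\in\mathcal{H}$ is $\mu^*$-measurable if $\mu^*(A)=\mu^*(A\cap E)+\mu^*(A\cap E')$ for every $A\in\mathcal{H}$, where $E'$ denotes the complement of $E$. Let $\overline{S}$ denote the class of all $\mu^*$-measurable sets. Let $K=\{B\subseteq X: B\cap E\in\mathcal{H}\text{ for all }E\in\mathcal{H}\}$. A set $Q\in K$ is called $\mu^{**}$-measurable if $Q\cap E$ is $\mu^*$-measurable for every $\mu^*$-measurable $E\in\mathcal{H}$, i.e. for all $A\in\mathcal{H}$ and all $E\in\overline{S}$, $\mu^*(A)=\mu^*[A\cap(Q\cap E)]+\mu^*[A\cap(Q\cap E)']$. *)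

theory Defs
  imports "HOL-Analysis.Analysis"
begin

definition sigma_ring :: "'a set set \<Rightarrow> bool" where
  "sigma_ring R \<longleftrightarrow> R \<noteq> {} \<and>
     (\<forall>E\<in>R. \<forall>F\<in>R. E - F \<in> R) \<and>
     (\<forall>A :: nat \<Rightarrow> 'a set. range A \<subseteq> R \<longrightarrow> (\<Union>i. A i) \<in> R)"

definition hereditary :: "'a set set \<Rightarrow> bool" where
  "hereditary H \<longleftrightarrow> H \<noteq> {} \<and> (\<forall>E\<in>H. \<forall>F. F \<subseteq> E \<longrightarrow> F \<in> H)"

definition outer_measure_on :: "'a set set \<Rightarrow> ('a set \<Rightarrow> ennreal) \<Rightarrow> bool" where
  "outer_measure_on H \<mu> \<longleftrightarrow> \<mu> {} = 0 \<and>
     (\<forall>E\<in>H. \<forall>F\<in>H. E \<subseteq> F \<longrightarrow> \<mu> E \<le> \<mu> F) \<and>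
     (\<forall>A :: nat \<Rightarrow> 'a set. range A \<subseteq> H \<longrightarrow> \<mu> (\<Union>i. A i) \<le> (\<Sum>i. \<mu> (A i)))"

definition mu_star_measurable :: "'a set set \<Rightarrow> ('a set \<Rightarrow> ennreal) \<Rightarrow> 'a set \<Rightarrow> bool" where
  "mu_star_measurable H \<mu> E \<longleftrightarrow> E \<in> H \<and>
     (\<forall>A\<in>H. \<mu> A = \<mu> (A \<inter> E) + \<mu> (A \<inter> - E))"

definition Kclass :: "'a set set \<Rightarrow> 'a set \<Rightarrow> 'a set set" where
  "Kclass H X = {B. B \<subseteq> X \<and> (\<forall>E\<in>H. B \<inter> E \<in> H)}"

definition mu_star_star_measurable :: "'a set set \<Rightarrow> ('a set \<Rightarrow> ennreal) \<Rightarrow> 'a set \<Rightarrow> 'a set \<Rightarrow> bool" where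
  "mu_star_star_measurable H \<mu> X Q \<longleftrightarrow> Q \<in> Kclass H X \<and>
     (\<forall>E. mu_star_measurable H \<mu> E \<longrightarrow> mu_star_measurable H \<mu> (Q \<inter> E))"

end

theory Submission
  imports Defs
begin

lemma sr_UN: "sigma_ring H \<Longrightarrow> range (A::nat \<Rightarrow> _) \<subseteq> H \<Longrightarrow> (\<Union>i. A i) \<in> H"
  unfolding sigma_ring_def by (elim conjE, erule allE[of _ A], erule mp)

lemma sr_Un2:
  assumes "sigma_ring H" "A \<in> H" "B \<in> H" shows "A \<union> B \<in> H"
proof -
  let ?F = "\<lambda>i::nat. if i = 0 then A else B"
  have "range ?F \<subseteq> H" using assms by auto
  hence "(\<Union>i. ?F i) \<in> H" by (rule sr_UN[OF assms(1)])
  moreover have "(\<Union>i. ?F i) = A \<union> B" by (auto split: if_splits)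
  ultimately show ?thesis by simp
qed

lemma sr_Diff: "sigma_ring H \<Longrightarrow> A \<in> H \<Longrightarrow> B \<in> H \<Longrightarrow> A - B \<in> H"
  unfolding sigma_ring_def by (elim conjE, erule ballE[of _ _ A], erule ballE[of _ _ B], auto)

lemma her_sub: "hereditary H \<Longrightarrow> \<Omega> \<in> H \<Longrightarrow> Pow \<Omega> \<subseteq> H"
  unfolding hereditary_def by blast

lemma oms_Pow:
  assumes "hereditary H" "outer_measure_on H \<mu>" "\<Omega> \<in> H"
  shows "outer_measure_space (Pow \<Omega>) \<mu>"
proof -
  have P: "Pow \<Omega> \<subseteq> H" using her_sub assms by blast
  have a: "\<mu> {} = 0" "\<And>E F. E \<in> H \<Longrightarrow> F \<in> H \<Longrightarrow> E \<subseteq> F \<Longrightarrow> \<mu> E \<le> \<mu> F"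
    "\<And>A :: nat \<Rightarrow> _. range A \<subseteq> H \<Longrightarrow> \<mu> (\<Union>i. A i) \<le> (\<Sum>i. \<mu> (A i))"
    using assms(2) unfolding outer_measure_on_def by blast+
  have "positive (Pow \<Omega>) \<mu>" unfolding positive_def using a(1) by simp
  moreover have "increasing (Pow \<Omega>) \<mu>" unfolding increasing_def
  proof (intro ballI impI)
    fix x y assume "x \<in> Pow \<Omega>" "y \<in> Pow \<Omega>" "x \<subseteq> y"
    then show "\<mu> x \<le> \<mu> y" using a(2) P by blast
  qed
  moreover have "countably_subadditive (Pow \<Omega>) \<mu>" unfolding countably_subadditive_def
  proof (intro allI impI)
    fix A :: "nat \<Rightarrow> _" assume "range A \<subseteq> Pow \<Omega>"
    then have "range A \<subseteq> H" using P by blast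
    then show "\<mu> (\<Union>i. A i) \<le> (\<Sum>i. \<mu> (A i))" by (rule a(3))
  qed
  ultimately show ?thesis unfolding outer_measure_space_def by blast
qed

lemma meas_L:
  assumes "hereditary H" "mu_star_measurable H \<mu> E" "\<Omega> \<in> H" "E \<subseteq> \<Omega>"
  shows "E \<in> lambda_system \<Omega> (Pow \<Omega>) \<mu>"
proof -
  interpret sigma_algebra \<Omega> "Pow \<Omega>" by (rule sigma_algebra_Pow)
  have P: "Pow \<Omega> \<subseteq> H" using her_sub assms by blast
  show ?thesis unfolding lambda_system_eq
  proof (safe)
    fix x assume "x \<subseteq> \<Omega>"
    hence "x \<in> H" using P by blast
    hence "\<mu> x = \<mu> (x \<inter> E) + \<mu> (x \<inter> - E)" using assms(2) unfolding mu_star_measurable_def by blast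
    moreover have "x \<inter> - E = x - E" by blast
    ultimately show "\<mu> (x \<inter> E) + \<mu> (x - E) = \<mu> x" by simp
  qed (use assms in auto)
qed

lemma L_meas:
  assumes "E \<in> H" "\<And>A. A \<in> H \<Longrightarrow> \<exists>\<Omega>\<in>H. A \<subseteq> \<Omega> \<and> E \<in> lambda_system \<Omega> (Pow \<Omega>) \<mu>"
  shows "mu_star_measurable H \<mu> E"
  unfolding mu_star_measurable_def
proof (intro conjI ballI)
  fix A assume "A \<in> H"
  then obtain \<Omega> where "\<Omega> \<in> H" "A \<subseteq> \<Omega>" "E \<in> lambda_system \<Omega> (Pow \<Omega>) \<mu>" using assms by blast
  then interpret sigma_algebra \<Omega> "Pow \<Omega>" by (intro sigma_algebra_Pow)
  have "\<mu> (A \<inter> E) + \<mu> (A - E) = \<mu> A"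
    using \<open>E \<in> lambda_system \<Omega> (Pow \<Omega>) \<mu>\<close> \<open>A \<subseteq> \<Omega>\<close> unfolding lambda_system_eq by blast
  moreover have "A \<inter> - E = A - E" by blast
  ultimately show "\<mu> A = \<mu> (A \<inter> E) + \<mu> (A \<inter> - E)" by simp
qed (rule assms(1))

lemma L_sigma:
  assumes "hereditary H" "outer_measure_on H \<mu>" "\<Omega> \<in> H"
  shows "sigma_algebra \<Omega> (lambda_system \<Omega> (Pow \<Omega>) \<mu>)"
proof -
  interpret sigma_algebra \<Omega> "Pow \<Omega>" by (rule sigma_algebra_Pow)
  have "measure_space \<Omega> (lambda_system \<Omega> (Pow \<Omega>) \<mu>) \<mu>"
    by (rule caratheodory_lemma[OF oms_Pow[OF assms]])
  thus ?thesis by (simp add: measure_space_def)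
qed

lemma meas_Diff:
  assumes h: "hereditary H" "sigma_ring H" "outer_measure_on H \<mu>"
    and m: "mu_star_measurable H \<mu> M1" "mu_star_measurable H \<mu> M2"
  shows "mu_star_measurable H \<mu> (M1 - M2)"
proof (rule L_meas)
  have "M1 \<in> H" "M2 \<in> H" using m unfolding mu_star_measurable_def by auto
  thus "M1 - M2 \<in> H" by (rule sr_Diff[OF h(2)])
  fix A assume "A \<in> H"
  let ?O = "A \<union> (M1 \<union> M2)"
  have O: "?O \<in> H" by (rule sr_Un2[OF h(2) \<open>A \<in> H\<close> sr_Un2[OF h(2) \<open>M1 \<in> H\<close> \<open>M2 \<in> H\<close>]])
  interpret L: sigma_algebra ?O "lambda_system ?O (Pow ?O) \<mu>" by (rule L_sigma[OF h(1,3) O])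
  have "M1 \<in> lambda_system ?O (Pow ?O) \<mu>" "M2 \<in> lambda_system ?O (Pow ?O) \<mu>"
    by (intro meas_L[OF h(1) m(1) O], blast) (intro meas_L[OF h(1) m(2) O], blast)
  hence "M1 - M2 \<in> lambda_system ?O (Pow ?O) \<mu>" by (intro L.Diff)
  thus "\<exists>\<Omega>\<in>H. A \<subseteq> \<Omega> \<and> M1 - M2 \<in> lambda_system \<Omega> (Pow \<Omega>) \<mu>" using O \<open>A \<in> H\<close> by (intro bexI[of _ ?O]) auto
qed

lemma meas_UN:
  fixes M :: "nat \<Rightarrow> 'a set"
  assumes h: "hereditary H" "sigma_ring H" "outer_measure_on H \<mu>"
    and m: "\<And>i. mu_star_measurable H \<mu> (M i)"
  shows "mu_star_measurable H \<mu> (\<Union>i. M i)"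
proof (rule L_meas)
  have "range M \<subseteq> H" using m unfolding mu_star_measurable_def by auto
  thus U: "(\<Union>i. M i) \<in> H" by (rule sr_UN[OF h(2)])
  fix A assume "A \<in> H"
  let ?O = "A \<union> (\<Union>i. M i)"
  have O: "?O \<in> H" by (rule sr_Un2[OF h(2) \<open>A \<in> H\<close> U])
  interpret L: sigma_algebra ?O "lambda_system ?O (Pow ?O) \<mu>" by (rule L_sigma[OF h(1,3) O])
  have "range M \<subseteq> lambda_system ?O (Pow ?O) \<mu>"
  proof (rule image_subsetI)
    fix i
    have "M i \<subseteq> ?O" by auto
    then show "M i \<in> lambda_system ?O (Pow ?O) \<mu>" by (rule meas_L[OF h(1) m O])
  qed
  hence "(\<Union>i. M i) \<in> lambda_system ?O (Pow ?O) \<mu>" by (rule L.countable_nat_UN)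
  thus "\<exists>\<Omega>\<in>H. A \<subseteq> \<Omega> \<and> (\<Union>i. M i) \<in> lambda_system \<Omega> (Pow \<Omega>) \<mu>" using O \<open>A \<in> H\<close> by (intro bexI[of _ ?O]) auto
qed

lemma mssm_iff: "mu_star_star_measurable H \<mu> X Q \<longleftrightarrow> Q \<subseteq> X \<and> (\<forall>E\<in>H. Q \<inter> E \<in> H) \<and>
   (\<forall>E. mu_star_measurable H \<mu> E \<longrightarrow> mu_star_measurable H \<mu> (Q \<inter> E))"
  unfolding mu_star_star_measurable_def Kclass_def by simp

theorem theorem3p2:
  fixes H :: "'a set set" and \<mu> :: "'a set \<Rightarrow> ennreal" and X :: "'a set"
  assumes "hereditary H" and "sigma_ring H"
    and "outer_measure_on H \<mu>"
    and "X \<inter> \<Union>H \<noteq> {}"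
  shows "sigma_ring {Q. mu_star_star_measurable H \<mu> X Q}"
proof -
  have eH: "{} \<in> H" using assms(1) unfolding hereditary_def by blast
  have e0: "\<mu> {} = 0" using assms(3) unfolding outer_measure_on_def by blast
  have "mu_star_measurable H \<mu> {}"
    unfolding mu_star_measurable_def using eH e0 by simp
  hence "mu_star_star_measurable H \<mu> X {}"
    unfolding mssm_iff using eH by simp
  hence ne: "{Q. mu_star_star_measurable H \<mu> X Q} \<noteq> {}" by blast
  have diff: "mu_star_star_measurable H \<mu> X (Q1 - Q2)"
    if q1: "mu_star_star_measurable H \<mu> X Q1" and q2: "mu_star_star_measurable H \<mu> X Q2" for Q1 Q2
  proof -
    note a = q1[unfolded mssm_iff] q2[unfolded mssm_iff]
    have "(Q1 - Q2) \<inter> E \<in> H" if "E \<in> H" for E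
    proof -
      have "Q1 \<inter> E \<in> H" "Q2 \<inter> E \<in> H" using a that by auto
      hence "Q1 \<inter> E - Q2 \<inter> E \<in> H" by (rule sr_Diff[OF assms(2)])
      moreover have "Q1 \<inter> E - Q2 \<inter> E = (Q1 - Q2) \<inter> E" by blast
      ultimately show ?thesis by simp
    qed
    moreover have "mu_star_measurable H \<mu> ((Q1 - Q2) \<inter> E)" if "mu_star_measurable H \<mu> E" for E
    proof -
      have "mu_star_measurable H \<mu> (Q1 \<inter> E)" "mu_star_measurable H \<mu> (Q2 \<inter> E)"
        using a that by auto
      hence "mu_star_measurable H \<mu> (Q1 \<inter> E - Q2 \<inter> E)"
        by (rule meas_Diff[OF assms(1-3)])
      moreover have "Q1 \<inter> E - Q2 \<inter> E = (Q1 - Q2) \<inter> E" by blast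
      ultimately show ?thesis by simp
    qed
    moreover have "Q1 - Q2 \<subseteq> X" using a by auto
    ultimately show ?thesis unfolding mssm_iff by blast
  qed
  have un: "mu_star_star_measurable H \<mu> X (\<Union>i. Q i)"
    if q: "\<And>i. mu_star_star_measurable H \<mu> X (Q i)" for Q :: "nat \<Rightarrow> 'a set"
  proof -
    have a: "\<And>i. Q i \<subseteq> X" "\<And>i E. E \<in> H \<Longrightarrow> Q i \<inter> E \<in> H"
      "\<And>i E. mu_star_measurable H \<mu> E \<Longrightarrow> mu_star_measurable H \<mu> (Q i \<inter> E)"
      using q unfolding mssm_iff by blast+
    have "(\<Union>i. Q i) \<inter> E \<in> H" if "E \<in> H" for E
    proof -
      have "range (\<lambda>i. Q i \<inter> E) \<subseteq> H" using a(2) that by blast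
      hence "(\<Union>i. Q i \<inter> E) \<in> H" by (rule sr_UN[OF assms(2)])
      moreover have "(\<Union>i. Q i \<inter> E) = (\<Union>i. Q i) \<inter> E" by blast
      ultimately show ?thesis by simp
    qed
    moreover have "mu_star_measurable H \<mu> ((\<Union>i. Q i) \<inter> E)" if "mu_star_measurable H \<mu> E" for E
    proof -
      have "mu_star_measurable H \<mu> (\<Union>i. Q i \<inter> E)"
        by (rule meas_UN[OF assms(1-3)], rule a(3)[OF that])
      moreover have "(\<Union>i. Q i \<inter> E) = (\<Union>i. Q i) \<inter> E" by blast
      ultimately show ?thesis by simp
    qed
    moreover have "(\<Union>i. Q i) \<subseteq> X" using a(1) by blast
    ultimately show ?thesis unfolding mssm_iff by blast
  qed
  show ?thesis unfolding sigma_ring_def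
  proof (intro conjI ballI allI impI)
    fix E F assume "E \<in> {Q. mu_star_star_measurable H \<mu> X Q}" "F \<in> {Q. mu_star_star_measurable H \<mu> X Q}"
    then show "E - F \<in> {Q. mu_star_star_measurable H \<mu> X Q}" using diff by simp
  next
    fix A :: "nat \<Rightarrow> 'a set" assume "range A \<subseteq> {Q. mu_star_star_measurable H \<mu> X Q}"
    then have "\<And>i. mu_star_star_measurable H \<mu> X (A i)" by auto
    then show "(\<Union>i. A i) \<in> {Q. mu_star_star_measurable H \<mu> X Q}" using un by simp
  qed (rule ne)
qed

end
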